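(* Let $\mathbb{X}$ be an $n$-dimensional real polyhedral Banach space and let $x,y_1,\dots,y_m\in \mathbb{X}$ with $1\le m<n$. Suppose $y_1,\dots,y_m$ are linearly independent and $x\notin \mathbb{Y}=\mathrm{span}\{y_1,\dots,y_m\}$. Let $\psi:\mathbb{X}\to \mathbb{X}^{**}$ denote the canonical isometric isomorphism. Suppose that every point of $\bigcap_{i=1}^m\mathcal{N}(\psi(y_i))\cap S_{\mathbb{X}^*}$ is a smooth point of $B_{\mathbb{X}^*}$. Then the best approximation to $x$ out of $\mathbb{Y}$ is unique.
   Context: A finite-dimensional real Banach space is polyhedral if its closed unit ball has finitely many extreme points. $B_{\mathbb{X}^*}$, $S_{\mathbb{X}^*}$ are the closed unit ball and unit sphere of $\mathbb{X}^*$. $\mathcal{N}(\psi(y))=\{x^*\in\mathbb{X}^*: x^*(y)=0\}$. A point $u\in S_{\mathbb{X}^*}$ is a smooth point of $B_{\mathbb{X}^*}$ if there is a unique $\phi\in\mathbb{X}^{**}$ with $\|\phi\|=1$ and $\phi(u)=1$. $y_0\in\mathbb{Y}$ is a best approximation to $x$ out of $\mathbb{Y}$ if $\|x-y_0\|=\inf_{y\in\mathbb{Y}}\|x-y\|$. *)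

theory Defs
  imports "HOL-Analysis.Analysis"
begin

definition finite_dim_space :: "'a::real_normed_vector itself \<Rightarrow> bool" where
  "finite_dim_space _ \<longleftrightarrow> (\<exists>B::'a set. finite B \<and> span B = UNIV)"

definition polyhedral :: "'a::real_normed_vector itself \<Rightarrow> bool" where
  "polyhedral _ \<longleftrightarrow> finite {x::'a. x extreme_point_of cball 0 1}"

text \<open>The dual space X* is modelled by bounded linear functionals (blinfun)
  with the operator norm; the bidual accordingly.
  Canonical embedding psi from X to X**.\<close>
definition canon_emb :: "'a::real_normed_vector \<Rightarrow> (('a \<Rightarrow>\<^sub>L real) \<Rightarrow>\<^sub>L real)" where
  "canon_emb y = Blinfun (\<lambda>f. blinfun_apply f y)"

definition ker_dual :: "(('a::real_normed_vector \<Rightarrow>\<^sub>L real) \<Rightarrow>\<^sub>L real) \<Rightarrow> ('a \<Rightarrow>\<^sub>L real) set" where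
  "ker_dual \<phi> = {u. blinfun_apply \<phi> u = 0}"

definition smooth_point_dual_ball :: "('a::real_normed_vector \<Rightarrow>\<^sub>L real) \<Rightarrow> bool" where
  "smooth_point_dual_ball u \<longleftrightarrow> norm u = 1 \<and>
     (\<exists>!\<phi> :: ('a \<Rightarrow>\<^sub>L real) \<Rightarrow>\<^sub>L real. norm \<phi> = 1 \<and> blinfun_apply \<phi> u = 1)"

definition best_approx :: "'a::real_normed_vector set \<Rightarrow> 'a \<Rightarrow> 'a \<Rightarrow> bool" where
  "best_approx Y x y0 \<longleftrightarrow> y0 \<in> Y \<and> norm (x - y0) = (INF y\<in>Y. norm (x - y))"

end

theory Submission
  imports Defs
begin


definition bseqp :: "'a::real_normed_vector set \<Rightarrow> bool" where
"bseqp S \<longleftrightarrow> (\<forall>s::nat\<Rightarrow>'a. (\<forall>k. s k \<in> S) \<and> bounded (range s) \<longrightarrow>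
     (\<exists>l\<in>S. \<exists>r. strict_mono r \<and> (s \<circ> r) \<longlonglongrightarrow> l))"

lemma bseqp_closed: assumes "bseqp S" shows "closed S"
  unfolding closed_sequential_limits
proof (intro allI impI)
  fix x l assume h: "(\<forall>n. x n \<in> S) \<and> x \<longlonglongrightarrow> l"
  then have "bounded (range x)"
    using convergent_imp_bounded by blast
  then obtain l' r where "l' \<in> S" "strict_mono r" "(x \<circ> r) \<longlonglongrightarrow> l'"
    using assms h unfolding bseqp_def by blast
  moreover have "(x \<circ> r) \<longlonglongrightarrow> l" using h LIMSEQ_subseq_LIMSEQ \<open>strict_mono r\<close> by blast
  ultimately show "l \<in> S" using LIMSEQ_unique by metis
qed

lemma infdist_bound:
  fixes v s :: "'a::real_normed_vector"
  assumes "subspace S" "s \<in> S"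
  shows "\<bar>t\<bar> * infdist v S \<le> norm (s + t *\<^sub>R v)"
proof (cases "t = 0")
  case True then show ?thesis by simp
next
  case False
  have "- (inverse t *\<^sub>R s) \<in> S" using assms subspace_neg subspace_scale by blast
  then have "infdist v S \<le> dist v (- (inverse t *\<^sub>R s))" by (rule infdist_le)
  also have "\<dots> = norm (v + inverse t *\<^sub>R s)" by (simp add: dist_norm)
  finally have "\<bar>t\<bar> * infdist v S \<le> \<bar>t\<bar> * norm (v + inverse t *\<^sub>R s)"
    by (simp add: mult_left_mono)
  also have "\<dots> = norm (t *\<^sub>R (v + inverse t *\<^sub>R s))" by simp
  also have "\<dots> = norm (s + t *\<^sub>R v)" using False by (simp add: algebra_simps)
  finally show ?thesis .
qed

lemma bseqp_insert:
  fixes B :: "'a::real_normed_vector set"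
  assumes IH: "bseqp (span B)"
  shows "bseqp (span (insert v B))"
proof (cases "v \<in> span B")
  case True then show ?thesis using IH by (simp add: span_redundant)
next
  case False
  define S where "S = span B"
  have cl: "closed S" unfolding S_def by (rule bseqp_closed[OF IH])
  have ne: "S \<noteq> {}" using span_zero S_def by blast
  have dpos: "infdist v S > 0"
    using False in_closed_iff_infdist_zero[OF cl ne] infdist_nonneg S_def
    by (metis less_eq_real_def)
  show ?thesis unfolding bseqp_def
  proof (intro allI impI)
    fix w :: "nat \<Rightarrow> 'a" assume h: "(\<forall>k. w k \<in> span (insert v B)) \<and> bounded (range w)"
    then have "\<forall>k. \<exists>t. w k - t *\<^sub>R v \<in> S" using span_insert S_def by blast
    then have "\<exists>t. \<forall>k. w k - t k *\<^sub>R v \<in> S" by (rule choice)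
    then obtain t where t: "\<And>k. w k - t k *\<^sub>R v \<in> S" by blast
    have "bounded (range w)" using h by simp
    then obtain C where "\<forall>x\<in>range w. norm x \<le> C" unfolding bounded_iff by blast
    then have C: "\<And>k. norm (w k) \<le> C" by simp
    have tb: "\<bar>t k\<bar> \<le> C / infdist v S" for k
    proof -
      have "\<bar>t k\<bar> * infdist v S \<le> norm ((w k - t k *\<^sub>R v) + t k *\<^sub>R v)"
        using infdist_bound[OF _ t] S_def subspace_span by blast
      also have "\<dots> \<le> C" using C by simp
      finally show ?thesis using dpos by (simp add: field_simps)
    qed
    have "bounded (range t)" unfolding bounded_iff using tb by (auto intro!: exI[of _ "C / infdist v S"])
    then obtain l r where r: "strict_mono r" and l: "(t \<circ> r) \<longlonglongrightarrow> l"
      using bounded_imp_convergent_subsequence by blast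
    define s where "s = (\<lambda>k. w (r k) - t (r k) *\<^sub>R v)"
    have sS: "\<forall>k. s k \<in> span B" using t s_def S_def by simp
    have "norm (s k) \<le> C + (C / infdist v S) * norm v" for k
    proof -
      have "norm (s k) \<le> norm (w (r k)) + \<bar>t (r k)\<bar> * norm v"
        unfolding s_def by (metis norm_scaleR norm_triangle_ineq4)
      also have "\<dots> \<le> C + (C / infdist v S) * norm v"
        using C tb by (intro add_mono mult_right_mono) auto
      finally show ?thesis .
    qed
    then have "bounded (range s)" unfolding bounded_iff by (intro exI[of _ "C + (C / infdist v S) * norm v"]) auto
    then obtain l2 r2 where l2S: "l2 \<in> span B" and r2: "strict_mono r2" and l2: "(s \<circ> r2) \<longlonglongrightarrow> l2"
      using IH sS unfolding bseqp_def by blast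
    have tl: "(\<lambda>k. t (r (r2 k))) \<longlonglongrightarrow> l"
      using LIMSEQ_subseq_LIMSEQ[OF l r2] by (simp add: o_def)
    have "(\<lambda>k. s (r2 k) + t (r (r2 k)) *\<^sub>R v) \<longlonglongrightarrow> l2 + l *\<^sub>R v"
      using l2 tl by (intro tendsto_intros) (auto simp: o_def)
    then have "(w \<circ> (r \<circ> r2)) \<longlonglongrightarrow> l2 + l *\<^sub>R v" by (simp add: s_def o_def)
    moreover have "strict_mono (r \<circ> r2)" using r r2 strict_mono_o by blast
    moreover have "l2 + l *\<^sub>R v \<in> span (insert v B)"
      using l2S unfolding span_insert by (auto intro!: exI[of _ l])
    ultimately show "\<exists>l\<in>span (insert v B). \<exists>r. strict_mono r \<and> (w \<circ> r) \<longlonglongrightarrow> l" by blast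
  qed
qed

lemma bseqp_finite: "finite B \<Longrightarrow> bseqp (span (B::'a::real_normed_vector set))"
proof (induction B rule: finite_induct)
  case empty
  show ?case unfolding bseqp_def
  proof (intro allI impI)
    fix s :: "nat \<Rightarrow> 'a" assume "(\<forall>k. s k \<in> span ({}::'a set)) \<and> bounded (range s)"
    then have "s = (\<lambda>k. 0)" by auto
    then show "\<exists>l\<in>span {}. \<exists>r. strict_mono r \<and> (s \<circ> r) \<longlonglongrightarrow> l"
      by (auto intro!: exI[of _ id] simp: strict_mono_def o_def span_zero)
  qed
next
  case (insert x F) then show ?case using bseqp_insert by blast
qed



definition lin_on :: "'a::real_vector set \<Rightarrow> ('a \<Rightarrow> real) \<Rightarrow> bool" where
 "lin_on M f \<longleftrightarrow> (\<forall>a\<in>M. \<forall>b\<in>M. f (a+b) = f a + f b) \<and> (\<forall>a\<in>M. \<forall>r. f (r *\<^sub>R a) = r * f a)"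

lemma ext1:
  fixes M :: "'a::real_normed_vector set"
  assumes M: "subspace M" and v: "v \<notin> M" and f: "lin_on M f"
   and cond: "\<forall>m\<in>M. \<forall>t. f m + t * c \<le> norm (m + t *\<^sub>R v)"
  shows "\<exists>g. lin_on (span (insert v M)) g \<and> (\<forall>m\<in>M. g m = f m) \<and> g v = c
            \<and> (\<forall>w\<in>span (insert v M). g w \<le> norm w)"
proof -
  have spanM: "span M = M" using M span_eq_iff by blast
  have rep: "\<exists>m t. m \<in> M \<and> w = m + t *\<^sub>R v" if w: "w \<in> span (insert v M)" for w
  proof -
    obtain t where "w - t *\<^sub>R v \<in> M" using w unfolding span_insert spanM by blast
    then show ?thesis by (intro exI[of _ "w - t *\<^sub>R v"] exI[of _ t]) simp
  qed
  have inspan: "m + t *\<^sub>R v \<in> span (insert v M)" if "m \<in> M" for m t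
    unfolding span_insert spanM using that by (auto intro!: exI[of _ t])
  have uniq: "s = t" if a: "w - t *\<^sub>R v \<in> M" "w - s *\<^sub>R v \<in> M" for w s t
  proof (rule ccontr)
    assume st: "s \<noteq> t"
    have "(w - t *\<^sub>R v) - (w - s *\<^sub>R v) \<in> M" using a M subspace_diff by blast
    then have "(s - t) *\<^sub>R v \<in> M" by (simp add: algebra_simps)
    then have "inverse (s - t) *\<^sub>R ((s - t) *\<^sub>R v) \<in> M" using M subspace_scale by blast
    then show False using st v by simp
  qed
  define co where "co w = (THE t. w - t *\<^sub>R v \<in> M)" for w
  have co: "co w = t" if "w - t *\<^sub>R v \<in> M" for w t
    unfolding co_def using uniq that by (intro the_equality) auto
  define g where "g w = f (w - co w *\<^sub>R v) + co w * c" for w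
  have g_eq: "g (m + t *\<^sub>R v) = f m + t * c" if "m \<in> M" for m t
  proof -
    have "co (m + t *\<^sub>R v) = t" using that by (intro co) simp
    then show ?thesis unfolding g_def by simp
  qed
  have f0: "f 0 = 0"
  proof -
    have "f (0 *\<^sub>R 0) = 0 * f 0" using f M subspace_0 unfolding lin_on_def by blast
    then show ?thesis by simp
  qed
  have "lin_on (span (insert v M)) g" unfolding lin_on_def
  proof (intro conjI ballI allI)
    fix a b assume "a \<in> span (insert v M)" "b \<in> span (insert v M)"
    then obtain ma ta mb tb where ma: "ma \<in> M" "a = ma + ta *\<^sub>R v" and mb: "mb \<in> M" "b = mb + tb *\<^sub>R v"
      using rep by blast
    have "a + b = (ma + mb) + (ta + tb) *\<^sub>R v" using ma mb by (simp add: algebra_simps)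
    moreover have "ma + mb \<in> M" using ma mb M subspace_add by blast
    ultimately have "g (a + b) = f (ma + mb) + (ta + tb) * c" using g_eq by simp
    also have "\<dots> = g a + g b" using ma mb g_eq f unfolding lin_on_def by (simp add: algebra_simps)
    finally show "g (a + b) = g a + g b" .
  next
    fix a r assume "a \<in> span (insert v M)"
    then obtain ma ta where ma: "ma \<in> M" "a = ma + ta *\<^sub>R v" using rep by blast
    have "r *\<^sub>R a = r *\<^sub>R ma + (r * ta) *\<^sub>R v" using ma by (simp add: algebra_simps)
    moreover have "r *\<^sub>R ma \<in> M" using ma M subspace_scale by blast
    ultimately have "g (r *\<^sub>R a) = f (r *\<^sub>R ma) + (r * ta) * c" using g_eq by simp
    also have "\<dots> = r * g a" using ma g_eq f unfolding lin_on_def by (simp add: algebra_simps)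
    finally show "g (r *\<^sub>R a) = r * g a" .
  qed
  moreover have "\<forall>m\<in>M. g m = f m" using g_eq[of _ 0] by simp
  moreover have "g (0 + 1 *\<^sub>R v) = f 0 + 1 * c" using g_eq M subspace_0 by blast
  then have "g v = c" using f0 by simp
  moreover have "\<forall>w\<in>span (insert v M). g w \<le> norm w"
  proof
    fix w assume "w \<in> span (insert v M)"
    then obtain m t where "m \<in> M" "w = m + t *\<^sub>R v" using rep by blast
    then show "g w \<le> norm w" using g_eq cond by simp
  qed
  ultimately show ?thesis by blast
qed

lemma choose_c:
  fixes M :: "'a::real_normed_vector set"
  assumes M: "subspace M" and f: "lin_on M f" and dom: "\<forall>m\<in>M. f m \<le> norm m"
  shows "\<exists>c. \<forall>m\<in>M. \<forall>t. f m + t * c \<le> norm (m + t *\<^sub>R v)"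
proof -
  have fadd: "f (a + b) = f a + f b" if "a \<in> M" "b \<in> M" for a b using f that unfolding lin_on_def by blast
  have fsc: "f (r *\<^sub>R a) = r * f a" if "a \<in> M" for a r using f that unfolding lin_on_def by blast
  have K: "f m1 - norm (m1 - v) \<le> norm (m2 + v) - f m2" if "m1 \<in> M" "m2 \<in> M" for m1 m2
  proof -
    have "f m1 + f m2 = f (m1 + m2)" using fadd that by simp
    also have "\<dots> \<le> norm (m1 + m2)" using dom that M subspace_add by blast
    also have "\<dots> = norm ((m1 - v) + (m2 + v))" by (simp add: algebra_simps)
    also have "\<dots> \<le> norm (m1 - v) + norm (m2 + v)" by (rule norm_triangle_ineq)
    finally show ?thesis by simp
  qed
  define A where "A = (\<lambda>m. f m - norm (m - v)) ` M"
  define c where "c = Sup A"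
  have Ane: "A \<noteq> {}" using M subspace_0 A_def by blast
  have bdd: "bdd_above A" unfolding A_def bdd_above_def
    using K[of _ 0] M subspace_0 by blast
  have c1: "f m - norm (m - v) \<le> c" if "m \<in> M" for m
    unfolding c_def using bdd that A_def by (intro cSup_upper) auto
  have c2: "c \<le> norm (m + v) - f m" if "m \<in> M" for m
    unfolding c_def using Ane that A_def K by (intro cSup_least) auto
  have "\<forall>m\<in>M. \<forall>t. f m + t * c \<le> norm (m + t *\<^sub>R v)"
  proof (intro ballI allI)
    fix m and t :: real assume m: "m \<in> M"
    consider "t = 0" | "t > 0" | "t < 0" using less_linear[of t 0] by blast
    then show "f m + t * c \<le> norm (m + t *\<^sub>R v)"
    proof cases
      case 1 then show ?thesis using dom m by simp
    next
      case 2
      have mm: "inverse t *\<^sub>R m \<in> M" using m M subspace_scale by blast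
      have e1: "t * f (inverse t *\<^sub>R m) = f m" using fsc[OF m] 2 by simp
      have "m + t *\<^sub>R v = t *\<^sub>R (inverse t *\<^sub>R m + v)"
        using 2 by (simp add: scaleR_right_distrib)
      then have e2: "norm (m + t *\<^sub>R v) = t * norm (inverse t *\<^sub>R m + v)"
        using 2 by simp
      have "t * c \<le> t * (norm (inverse t *\<^sub>R m + v) - f (inverse t *\<^sub>R m))"
        using c2[OF mm] 2 by (simp add: mult_left_mono)
      also have "\<dots> = norm (m + t *\<^sub>R v) - f m"
        using e1 e2 by (simp add: right_diff_distrib)
      finally show ?thesis by simp
    next
      case 3
      define s where "s = - t"
      have s: "s > 0" using 3 s_def by simp
      have mm: "inverse s *\<^sub>R m \<in> M" using m M subspace_scale by blast
      have e1: "s * f (inverse s *\<^sub>R m) = f m" using fsc[OF m] s by simp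
      have "m + t *\<^sub>R v = s *\<^sub>R (inverse s *\<^sub>R m - v)"
        using s by (simp add: scaleR_right_diff_distrib s_def)
      then have e2: "norm (m + t *\<^sub>R v) = s * norm (inverse s *\<^sub>R m - v)"
        using s by simp
      have "s * (f (inverse s *\<^sub>R m) - norm (inverse s *\<^sub>R m - v)) \<le> s * c"
        using c1[OF mm] s by (simp add: mult_left_mono)
      then have "f m - norm (m + t *\<^sub>R v) \<le> s * c"
        using e1 e2 by (simp add: right_diff_distrib)
      then show ?thesis by (simp add: s_def)
    qed
  qed
  then show ?thesis by blast
qed

lemma span_insert_span: "span (insert b (span S)) = span (insert b S)"
  unfolding span_insert span_span ..

lemma HB_finite:
  fixes M :: "'a::real_normed_vector set"
  assumes "finite B" and M: "subspace M" and f: "lin_on M f" and dom: "\<forall>m\<in>M. f m \<le> norm m"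
  shows "\<exists>g. lin_on (span (M \<union> B)) g \<and> (\<forall>m\<in>M. g m = f m) \<and> (\<forall>w\<in>span (M \<union> B). g w \<le> norm w)"
  using assms(1)
proof (induction B rule: finite_induct)
  case empty
  have "span M = M" using M span_eq_iff by blast
  note sM = this
  show ?case unfolding Un_empty_right sM using f dom by blast
next
  case (insert b B)
  then obtain g where g: "lin_on (span (M \<union> B)) g" "\<forall>m\<in>M. g m = f m" "\<forall>w\<in>span (M \<union> B). g w \<le> norm w"
    by blast
  have eq: "span (M \<union> insert b B) = span (insert b (span (M \<union> B)))"
    by (simp add: span_insert_span)
  show ?case
  proof (cases "b \<in> span (M \<union> B)")
    case True
    then have "span (insert b (span (M \<union> B))) = span (M \<union> B)"
      using span_redundant[of b "span (M \<union> B)"] by (simp add: span_span)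
    then show ?thesis using g eq by auto
  next
    case False
    obtain c where c: "\<forall>m\<in>span (M \<union> B). \<forall>t. g m + t * c \<le> norm (m + t *\<^sub>R b)"
      using choose_c[OF subspace_span g(1) g(3)] by blast
    obtain g' where g': "lin_on (span (insert b (span (M \<union> B)))) g'"
      "\<forall>m\<in>span (M \<union> B). g' m = g m" "\<forall>w\<in>span (insert b (span (M \<union> B))). g' w \<le> norm w"
      using ext1[OF subspace_span False g(1) c] by blast
    have "\<forall>m\<in>M. g' m = f m" using g'(2) g(2) span_superset[of "M \<union> B"] by auto
    then show ?thesis using g' eq by auto
  qed
qed

lemma HB:
  fixes M :: "'a::real_normed_vector set"
  assumes fd: "finite_dim_space TYPE('a)" and M: "subspace M" and f: "lin_on M f"
    and dom: "\<forall>m\<in>M. f m \<le> norm m"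
  shows "\<exists>g. bounded_linear g \<and> (\<forall>m\<in>M. g m = f m) \<and> (\<forall>w. \<bar>g w\<bar> \<le> norm w)"
proof -
  obtain B :: "'a set" where B: "finite B" "span B = UNIV" using fd unfolding finite_dim_space_def by blast
  have U: "span (M \<union> B) = UNIV" using B(2) span_mono[of B "M \<union> B"] by auto
  obtain g where g: "lin_on UNIV g" "\<forall>m\<in>M. g m = f m" "\<forall>w. g w \<le> norm w"
    using HB_finite[OF B(1) M f dom] U by auto
  have add: "g (a + b) = g a + g b" for a b using g(1) unfolding lin_on_def by blast
  have sc: "g (r *\<^sub>R a) = r * g a" for a r using g(1) unfolding lin_on_def by blast
  have ab: "\<bar>g w\<bar> \<le> norm w" for w
  proof -
    have "g (-w) = - g w" using sc[of "-1" w] by simp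
    then show ?thesis using g(3)[rule_format, of w] g(3)[rule_format, of "-w"] by simp
  qed
  have "bounded_linear g"
    by (rule bounded_linear_intro[where K=1]) (use add sc ab in auto)
  then show ?thesis using g(2) ab by blast
qed



lemma canon_apply: "blinfun_apply (canon_emb z) f = blinfun_apply f z"
  unfolding canon_emb_def
  by (subst bounded_linear_Blinfun_apply[OF bounded_bilinear.bounded_linear_left[OF bounded_bilinear_blinfun_apply]]) simp

lemma ba_iff: "best_approx Y x z \<longleftrightarrow> z \<in> Y \<and> (\<forall>y\<in>Y. norm (x - z) \<le> norm (x - y))"
proof
  assume h: "best_approx Y x z"
  have "bdd_below ((\<lambda>y. norm (x - y)) ` Y)" by (rule bdd_belowI[of _ 0]) auto
  then show "z \<in> Y \<and> (\<forall>y\<in>Y. norm (x - z) \<le> norm (x - y))"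
    using h unfolding best_approx_def by (auto intro: cINF_lower)
next
  assume h: "z \<in> Y \<and> (\<forall>y\<in>Y. norm (x - z) \<le> norm (x - y))"
  have "Inf ((\<lambda>y. norm (x - y)) ` Y) = norm (x - z)"
    using h by (intro cInf_eq_minimum) auto
  then show "best_approx Y x z" using h unfolding best_approx_def by simp
qed

lemma exists_min:
  fixes x :: "'a::real_normed_vector"
  assumes "finite S"
  shows "\<exists>y0\<in>span S. \<forall>y\<in>span S. norm (x - y0) \<le> norm (x - y)"
proof -
  define Y where "Y = span S"
  define d where "d = (INF y\<in>Y. norm (x - y))"
  have Yne: "Y \<noteq> {}" using span_zero Y_def by blast
  have bdd: "bdd_below ((\<lambda>y. norm (x - y)) ` Y)" by (rule bdd_belowI[of _ 0]) auto
  have dle: "d \<le> norm (x - y)" if "y \<in> Y" for y unfolding d_def using bdd that by (rule cINF_lower)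
  have "\<forall>k. \<exists>y\<in>Y. norm (x - y) < d + inverse (real (Suc k))"
  proof
    fix k
    have "d < d + inverse (real (Suc k))" by simp
    then show "\<exists>y\<in>Y. norm (x - y) < d + inverse (real (Suc k))"
      using cINF_less_iff[OF Yne bdd] unfolding d_def by blast
  qed
  then have "\<exists>ys. \<forall>k. ys k \<in> Y \<and> norm (x - ys k) < d + inverse (real (Suc k))" unfolding Bex_def by (rule choice)
  then obtain ys where ys: "\<And>k. ys k \<in> Y" "\<And>k. norm (x - ys k) < d + inverse (real (Suc k))" by blast
  have "norm (ys k) \<le> norm x + (d + 1)" for k
  proof -
    have "norm (ys k) \<le> norm x + norm (x - ys k)" using norm_triangle_ineq4[of x "x - ys k"] by simp
    moreover have "inverse (real (Suc k)) \<le> 1" by (simp add: inverse_le_1_iff)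
    ultimately show ?thesis using ys(2)[of k] by linarith
  qed
  then have "bounded (range ys)" unfolding bounded_iff by (intro exI[of _ "norm x + (d + 1)"]) auto
  then obtain y0 r where y0: "y0 \<in> Y" and r: "strict_mono r" and lim: "(ys \<circ> r) \<longlonglongrightarrow> y0"
    using bseqp_finite[OF assms] ys(1) unfolding bseqp_def Y_def by blast
  have l1: "(\<lambda>k. norm (x - ys (r k))) \<longlonglongrightarrow> norm (x - y0)"
    using lim by (intro tendsto_intros) (simp add: o_def)
  have l2: "(\<lambda>k. d + inverse (real (Suc (r k)))) \<longlonglongrightarrow> d + 0"
    using LIMSEQ_subseq_LIMSEQ[OF LIMSEQ_inverse_real_of_nat r] by (intro tendsto_intros) (simp add: o_def)
  have "norm (x - y0) \<le> d + 0"
    by (rule LIMSEQ_le[OF l1 l2]) (use ys(2) less_imp_le in blast)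
  then have "\<forall>y\<in>Y. norm (x - y0) \<le> norm (x - y)" using dle by force
  then show ?thesis using y0 Y_def by blast
qed

lemma separate:
  fixes w :: "'a::real_normed_vector"
  assumes fd: "finite_dim_space TYPE('a)" and w: "w \<noteq> 0"
  shows "\<exists>h. bounded_linear h \<and> h w = norm w"
proof -
  have l0: "lin_on {0::'a} (\<lambda>_. 0)" unfolding lin_on_def by simp
  have c: "\<forall>m\<in>{0::'a}. \<forall>t. 0 + t * norm w \<le> norm (m + t *\<^sub>R w)"
    by (simp add: mult_right_mono)
  obtain g1 where g1: "lin_on (span (insert w {0})) g1" "g1 w = norm w"
     "\<forall>z\<in>span (insert w {0}). g1 z \<le> norm z"
    using ext1[OF subspace_single_0 _ l0 c] w by auto
  obtain h where h: "bounded_linear h" "\<forall>m\<in>span (insert w {0}). h m = g1 m"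
    using HB[OF fd subspace_span g1(1) g1(3)] by blast
  have "w \<in> span (insert w {0})" by (simp add: span_base)
  then have "h w = norm w" using h(2) g1(2) by simp
  then show ?thesis using h(1) by blast
qed



theorem theorem5p7:
  fixes x :: "'a::banach" and y :: "nat \<Rightarrow> 'a" and n m :: nat
  assumes "finite_dim_space TYPE('a)"
    and "dim (UNIV :: 'a set) = n"
    and "polyhedral TYPE('a)"
    and "1 \<le> m" and "m < n"
    and "inj_on y {1..m}" and "independent (y ` {1..m})"
    and "x \<notin> span (y ` {1..m})"
    and "\<forall>u \<in> (\<Inter>i\<in>{1..m}. ker_dual (canon_emb (y i))) \<inter> {u. norm u = 1}.
           smooth_point_dual_ball u"
  shows "\<exists>!y0. best_approx (span (y ` {1..m})) x y0"
proof -
  note fd = assms(1)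
  define Y where "Y = span (y ` {1..m})"
  have xY: "x \<notin> Y" using assms(8) Y_def by simp
  have subY: "subspace Y" unfolding Y_def by simp
  obtain y0 where y0: "y0 \<in> Y" "\<forall>z\<in>Y. norm (x - y0) \<le> norm (x - z)"
    using exists_min[of "y ` {1..m}" x] Y_def by auto
  have uniq: "y1 = y0" if y1: "y1 \<in> Y" "\<forall>z\<in>Y. norm (x - y1) \<le> norm (x - z)" for y1
  proof -
    define d where "d = norm (x - y0)"
    define v where "v = x - y0"
    have d1: "norm (x - y1) = d" using y0 y1 d_def by force
    have "x \<noteq> y0" using xY y0 by auto
    then have dpos: "d > 0" using d_def by simp
    have vY: "v \<notin> Y"
    proof
      assume "v \<in> Y"
      then have "v + y0 \<in> Y" using y0 subY subspace_add by blast
      then show False using xY v_def by simp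
    qed
    have l0: "lin_on Y (\<lambda>_. 0)" unfolding lin_on_def by simp
    have cond: "\<forall>mm\<in>Y. \<forall>t. 0 + t * d \<le> norm (mm + t *\<^sub>R v)"
    proof (intro ballI allI)
      fix mm and t :: real assume mm: "mm \<in> Y"
      show "0 + t * d \<le> norm (mm + t *\<^sub>R v)"
      proof (cases "t = 0")
        case True then show ?thesis by simp
      next
        case False
        have "y0 - inverse t *\<^sub>R mm \<in> Y" using y0(1) mm subY subspace_diff subspace_scale by blast
        then have "d \<le> norm (x - (y0 - inverse t *\<^sub>R mm))" using y0(2) d_def by blast
        moreover have "mm + t *\<^sub>R v = t *\<^sub>R (x - (y0 - inverse t *\<^sub>R mm))"
          using False by (simp add: v_def algebra_simps)
        ultimately have "\<bar>t\<bar> * d \<le> norm (mm + t *\<^sub>R v)" by (simp add: mult_left_mono)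
        moreover have "t * d \<le> \<bar>t\<bar> * d" using dpos by (simp add: mult_right_mono)
        ultimately show ?thesis by simp
      qed
    qed
    obtain g1 where g1: "lin_on (span (insert v Y)) g1" "\<forall>mm\<in>Y. g1 mm = 0" "g1 v = d"
      "\<forall>w\<in>span (insert v Y). g1 w \<le> norm w"
      using ext1[OF subY vY l0 cond] by blast
    obtain g where g: "bounded_linear g" "\<forall>w\<in>span (insert v Y). g w = g1 w" "\<forall>w. \<bar>g w\<bar> \<le> norm w"
      using HB[OF fd subspace_span g1(1) g1(4)] by blast
    have gY: "g z = 0" if "z \<in> Y" for z
    proof -
      have "z \<in> span (insert v Y)" using that span_superset[of "insert v Y"] by blast
      then show ?thesis using g(2) g1(2) that by simp
    qed
    have gv: "g v = d" using g(2) g1(3) span_base[of v "insert v Y"] by simp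
    define F where "F = Blinfun g"
    have Fap: "blinfun_apply F = g" unfolding F_def using g(1) by (rule bounded_linear_Blinfun_apply)
    have nF1: "norm F \<le> 1" by (rule norm_blinfun_bound) (use g(3) Fap in simp_all)
    have "\<bar>g v\<bar> \<le> norm F * norm v" using norm_blinfun[of F v] Fap by simp
    then have "d \<le> norm F * d" using gv d_def v_def by simp
    then have "1 \<le> norm F" using dpos by simp
    then have nF: "norm F = 1" using nF1 by simp
    have Fker: "F \<in> (\<Inter>i\<in>{1..m}. ker_dual (canon_emb (y i)))"
    proof
      fix i assume "i \<in> {1..m}"
      then have "y i \<in> Y" unfolding Y_def by (simp add: span_base)
      then show "F \<in> ker_dual (canon_emb (y i))"
        unfolding ker_dual_def mem_Collect_eq canon_apply Fap using gY by blast
    qed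
    have smooth: "smooth_point_dual_ball F" using assms(9) Fker nF by blast
    then have ex1: "\<exists>!\<phi>::('a \<Rightarrow>\<^sub>L real) \<Rightarrow>\<^sub>L real. norm \<phi> = 1 \<and> blinfun_apply \<phi> F = 1"
      unfolding smooth_point_dual_ball_def by blast
    then obtain phi where phi_all: "\<forall>p::('a \<Rightarrow>\<^sub>L real) \<Rightarrow>\<^sub>L real. norm p = 1 \<and> blinfun_apply p F = 1 \<longrightarrow> p = phi"
      by (elim ex1E) blast
    define z0 where "z0 = inverse d *\<^sub>R (x - y0)"
    define z1 where "z1 = inverse d *\<^sub>R (x - y1)"
    have "y0 - y1 \<in> Y" using y0 y1 subY subspace_diff by blast
    then have "g (y0 - y1) = 0" by (rule gY)
    moreover have "x - y1 = v + (y0 - y1)" unfolding v_def by simp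
    ultimately have g1v: "g (x - y1) = d"
      using gv linear_add[OF bounded_linear.linear[OF g(1)], of v "y0 - y1"] by (simp only: add_0_right)
    have Fz: "blinfun_apply F z = 1" and nz: "norm z = 1" if "z = z0 \<or> z = z1" for z
    proof -
      have "g z = inverse d * d" using that g1v gv linear_scale[OF bounded_linear.linear[OF g(1)]]
        unfolding z0_def z1_def v_def by auto
      then show "blinfun_apply F z = 1" using Fap dpos by simp
      show "norm z = 1" using that d1 dpos unfolding z0_def z1_def d_def by auto
    qed
    have ce: "canon_emb z = phi" if "z = z0 \<or> z = z1" for z
    proof (rule phi_all[rule_format])
      have a: "blinfun_apply (canon_emb z) F = 1" unfolding canon_apply by (rule Fz[OF that])
      have "norm (canon_emb z) \<le> 1"
      proof (rule norm_blinfun_bound)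
        fix f :: "'a \<Rightarrow>\<^sub>L real"
        show "norm (blinfun_apply (canon_emb z) f) \<le> 1 * norm f"
          unfolding canon_apply using norm_blinfun[of f z] nz[OF that] by simp
      qed simp
      moreover have "norm (blinfun_apply (canon_emb z) F) \<le> norm (canon_emb z) * norm F"
        by (rule norm_blinfun)
      ultimately show "norm (canon_emb z) = 1 \<and> blinfun_apply (canon_emb z) F = 1"
        using a nF by simp
    qed
    have cee: "canon_emb z0 = canon_emb z1" using ce[of z0] ce[of z1] by simp
    have eqf: "blinfun_apply f z0 = blinfun_apply f z1" for f :: "'a \<Rightarrow>\<^sub>L real"
    proof -
      have "blinfun_apply (canon_emb z0) f = blinfun_apply (canon_emb z1) f" using cee by simp
      then show ?thesis by (simp only: canon_apply)
    qed
    have "z0 = z1"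
    proof (rule ccontr)
      assume "z0 \<noteq> z1"
      then have "z0 - z1 \<noteq> 0" by simp
      then obtain h where h: "bounded_linear h" "h (z0 - z1) = norm (z0 - z1)"
        using separate[OF fd] by blast
      have "h z0 = h z1" using eqf[of "Blinfun h"] bounded_linear_Blinfun_apply[OF h(1)] by simp
      then have "h (z0 - z1) = 0" using linear_diff[OF bounded_linear.linear[OF h(1)]] by simp
      then show False using h(2) \<open>z0 - z1 \<noteq> 0\<close> by simp
    qed
    then have "d *\<^sub>R z0 = d *\<^sub>R z1" by simp
    then have "x - y0 = x - y1" using dpos unfolding z0_def z1_def by simp
    then show ?thesis by simp
  qed
  show ?thesis
  proof (rule ex1I[of _ y0])
    show "best_approx (span (y ` {1..m})) x y0" unfolding ba_iff using y0 Y_def by simp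
  next
    fix y1 assume "best_approx (span (y ` {1..m})) x y1"
    then show "y1 = y0" unfolding ba_iff using uniq Y_def by simp
  qed
qed

end
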